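(* Let $k\ge 1$ and let $K$ be a subgroup of the cyclic group $\mathbb{Z}_{2^k}$. Then $\Gamma_{\mathbb{Z}_{2^k},K}$ admits a perfect code if and only if $|K|\in\{1,2,2^k\}$.
   Context: For a subgroup $H$ of a finite abelian group $A$ (written additively with identity $0$), the subgroup sum graph $\Gamma_{A,H}$ is the simple undirected graph with vertex set $A$ in which distinct vertices $x,y$ are adjacent if and only if $x+y\in H\setminus\{0\}$. A perfect code in a graph is a set $C$ of vertices that is independent and such that every vertex not in $C$ is adjacent to exactly one vertex of $C$. *)

theory Defs
  imports "HOL-Number_Theory.Residues"
begin

text \<open>Subgroup sum graph Gamma_{A,H} of an abelian group A (given as a monoid
structure whose operation is the group addition): distinct x, y adjacent iff
x + y lies in H minus the identity.\<close>
definition sum_graph_adj :: "('a, 'b) monoid_scheme \<Rightarrow> 'a set \<Rightarrow> 'a \<Rightarrow> 'a \<Rightarrow> bool" where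
  "sum_graph_adj A H x y \<longleftrightarrow> x \<noteq> y \<and> x \<otimes>\<^bsub>A\<^esub> y \<in> H - {\<one>\<^bsub>A\<^esub>}"

definition perfect_code :: "'a set \<Rightarrow> ('a \<Rightarrow> 'a \<Rightarrow> bool) \<Rightarrow> 'a set \<Rightarrow> bool" where
  "perfect_code V adj C \<longleftrightarrow>
     C \<subseteq> V \<and> (\<forall>x\<in>C. \<forall>y\<in>C. \<not> adj x y) \<and>
     (\<forall>v\<in>V - C. \<exists>!c. c \<in> C \<and> adj v c)"

end

theory Submission
  imports Defs
begin

locale sgK =
  fixes n :: int and K :: "int set"
  assumes n1: "n > 1" and Ksub: "K \<subseteq> {0..<n}" and K0: "0 \<in> K"
    and Kadd: "\<And>x y. x \<in> K \<Longrightarrow> y \<in> K \<Longrightarrow> (x + y) mod n \<in> K"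
begin

definition P :: "int \<Rightarrow> bool" where "P z \<longleftrightarrow> z mod n \<in> K"

lemma P_add: "P a \<Longrightarrow> P b \<Longrightarrow> P (a + b)"
  unfolding P_def using Kadd[of "a mod n" "b mod n"] by (simp add: mod_add_eq)

lemma P_0: "P 0" using K0 by (simp add: P_def)

lemma P_nmult: "P a \<Longrightarrow> P (int m * a)"
proof (induction m)
  case 0 then show ?case using P_0 by simp
next
  case (Suc m)
  have "int (Suc m) * a = a + int m * a" by (simp add: algebra_simps)
  then show ?case using Suc P_add by simp
qed

lemma P_shift: "P a \<Longrightarrow> P (a + n * t)"
  unfolding P_def by simp

lemma P_mult: "P a \<Longrightarrow> P (t * a)"
proof -
  assume a: "P a"
  have nn: "t mod n \<ge> 0" using n1 by simp
  define q where "q = t div n"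
  define r where "r = t mod n"
  have tq: "t = r + n * q" unfolding q_def r_def by simp
  have "t * a = r * a + n * (q * a)" unfolding tq by (simp add: algebra_simps)
  moreover have "int (nat r) = r" using nn r_def by simp
  ultimately have "t * a = int (nat r) * a + n * (q * a)" by simp
  thus ?thesis using P_shift[OF P_nmult[OF a, of "nat r"], of "q * a"] by simp
qed

lemma P_K: "x \<in> K \<Longrightarrow> P x" using Ksub by (auto simp: P_def)

definition G where "G = {x. 0 < x \<and> x \<le> n \<and> P x}"
definition g where "g = Min G"

lemma finG: "finite G"
proof -
  have "G \<subseteq> {1..n}" unfolding G_def by auto
  thus ?thesis using finite_subset by blast
qed

lemma nG: "n \<in> G" using n1 K0 unfolding G_def P_def by simp

lemma gG: "g \<in> G" unfolding g_def using finG nG Min_in by blast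

lemma g_pos: "0 < g" and g_le: "g \<le> n" and Pg: "P g"
  using gG unfolding G_def by auto

lemma g_min: "x \<in> G \<Longrightarrow> g \<le> x" unfolding g_def using finG by simp

lemma P_iff: "P x \<longleftrightarrow> g dvd x"
proof
  assume px: "P x"
  have "x + (- (x div g)) * g = x mod g" by (simp add: minus_mult_div_eq_mod[symmetric])
  hence pm: "P (x mod g)" using P_add[OF px P_mult[OF Pg, of "- (x div g)"]] by simp
  have "x mod g = 0"
  proof (rule ccontr)
    assume ne: "x mod g \<noteq> 0"
    have "0 \<le> x mod g" "x mod g < g" using g_pos by auto
    hence "x mod g \<in> G" using ne pm g_le unfolding G_def by auto
    thus False using g_min \<open>x mod g < g\<close> by fastforce
  qed
  thus "g dvd x" by auto
next
  assume "g dvd x"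
  then obtain t where "x = t * g" by (auto simp: dvd_def mult.commute)
  thus "P x" using P_mult Pg by simp
qed

lemma g_dvd_n: "g dvd n" using nG P_iff unfolding G_def by auto

lemma K_eq: "K = {x. 0 \<le> x \<and> x < n \<and> g dvd x}"
proof
  show "K \<subseteq> {x. 0 \<le> x \<and> x < n \<and> g dvd x}" using Ksub P_K P_iff by auto
  show "{x. 0 \<le> x \<and> x < n \<and> g dvd x} \<subseteq> K"
  proof
    fix x assume x: "x \<in> {x. 0 \<le> x \<and> x < n \<and> g dvd x}"
    hence "P x" using P_iff by auto
    thus "x \<in> K" using x unfolding P_def by simp
  qed
qed

lemma card_K: "card K = nat (n div g)"
proof -
  obtain s where ns: "n = g * s" using g_dvd_n by (rule dvdE)
  note sn = ns[symmetric]
  have "g * s div g = s" using g_pos by simp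
  hence sdiv: "n div g = s" using sn by simp
  have "K = (\<lambda>j. j * g) ` {0..<s}"
  proof
    show "K \<subseteq> (\<lambda>j. j * g) ` {0..<s}"
    proof
      fix x assume "x \<in> K"
      hence x: "0 \<le> x" "x < n" "g dvd x" using K_eq by auto
      from x(3) obtain a where a: "x = g * a" by (rule dvdE)
      have "0 \<le> g * a" using x(1) a by simp
      hence a0: "0 \<le> a" using g_pos by (simp add: zero_le_mult_iff)
      have "g * a < g * s" using x(2) a sn by simp
      hence a1: "a < s" using g_pos by (simp add: mult_less_cancel_left)
      have "x = a * g" using a by (simp add: mult.commute)
      thus "x \<in> (\<lambda>j. j * g) ` {0..<s}" using a0 a1 by auto
    qed
    show "(\<lambda>j. j * g) ` {0..<s} \<subseteq> K"
    proof
      fix x assume "x \<in> (\<lambda>j. j * g) ` {0..<s}"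
      then obtain j where j: "0 \<le> j" "j < s" "x = j * g" by auto
      have "j * g < s * g" using j g_pos by (simp add: mult_less_cancel_right)
      hence "x < g * s" using j(3) by (simp add: mult.commute)
      hence "x < n" using sn by simp
      moreover have "0 \<le> x" using j g_pos by simp
      moreover have "g dvd x" using j(3) by simp
      ultimately show "x \<in> K" using K_eq by auto
    qed
  qed
  moreover have "inj_on (\<lambda>j. j * g) {0..<s}" using g_pos by (auto simp: inj_on_def)
  hence "card ((\<lambda>j. j * g) ` {0..<s}) = card {0..<s}" by (rule card_image)
  ultimately have "card K = card {0..<s}" by (rule ssubst)
  thus ?thesis using sdiv by simp
qed

lemma mod_ne0: "0 < z \<Longrightarrow> z < 2 * n \<Longrightarrow> z \<noteq> n \<Longrightarrow> z mod n \<noteq> 0"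
proof
  assume z: "0 < z" "z < 2 * n" "z \<noteq> n" and m: "z mod n = 0"
  have "n dvd z" using m by auto
  then obtain t where t: "z = n * t" by (rule dvdE)
  have "0 < t" using z t n1 by (simp add: zero_less_mult_iff)
  moreover have "t < 2" using z t n1 by (simp add: mult.commute mult_less_cancel_right)
  ultimately have "t = 1" by simp
  thus False using z t by simp
qed

lemma no_code:
  assumes h: "g = 2*h" and s: "n = g*s" "even s" "s \<ge> 3"
  shows "\<not> perfect_code {0..n-1} (\<lambda>x y. x \<noteq> y \<and> (x+y) mod n \<in> K - {0}) C"
proof
  define A where "A = (\<lambda>x y. x \<noteq> y \<and> (x+y) mod n \<in> K - {0})"
  assume pc: "perfect_code {0..n-1} (\<lambda>x y. x \<noteq> y \<and> (x+y) mod n \<in> K - {0}) C"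
  hence CV: "C \<subseteq> {0..n-1}" and ind: "\<And>x y. x\<in>C \<Longrightarrow> y\<in>C \<Longrightarrow> \<not> A x y"
    and dom: "\<And>v. v \<in> {0..n-1} \<Longrightarrow> v \<notin> C \<Longrightarrow> \<exists>!c. c \<in> C \<and> A v c"
    unfolding perfect_code_def A_def by auto
  have hpos: "h > 0" using g_pos h by simp
  have s4: "s \<ge> 4" using s(2) s(3) by presburger
  have Aiff: "A x y \<longleftrightarrow> x \<noteq> y \<and> g dvd (x+y) \<and> (x+y) mod n \<noteq> 0" for x y
    unfolding A_def using P_iff[of "x+y"] by (auto simp: P_def)
  have Asym: "A x y \<Longrightarrow> A y x" for x y by (auto simp: Aiff add.commute)
  have negh: "(z - w) mod g = h" if "z mod g = 0" "w mod g = h" for z w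
  proof -
    have "(z - w) mod g = (z mod g - w mod g) mod g" by (simp add: mod_diff_eq)
    also have "\<dots> = (- h) mod (2*h)" using that h by simp
    also have "\<dots> = ((-1) * (2*h) + h) mod (2*h)" by simp
    also have "\<dots> = h mod (2*h)" by (simp only: add.commute[of "(-1)*(2*h)" h] mod_mult_self1)
    also have "\<dots> = h" using hpos by simp
    finally show ?thesis .
  qed
  define D where "D = {x. 0 \<le> x \<and> x < n \<and> x mod g = h}"
  have toD: "y \<in> D" if "x \<in> D" "0 \<le> y" "y < n" "A x y" for x y
  proof -
    have "(x + y) mod g = 0" using that Aiff by auto
    hence "((x+y) - x) mod g = h" using negh[of "x+y" x] that unfolding D_def by auto
    thus ?thesis using that unfolding D_def by simp
  qed
  have inD: "A x y \<longleftrightarrow> x \<noteq> y \<and> (x+y) mod n \<noteq> 0" if "x \<in> D" "y \<in> D" for x y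
  proof -
    have "(x+y) mod g = (x mod g + y mod g) mod g" by (simp add: mod_add_eq)
    also have "\<dots> = 0" using that h unfolding D_def by simp
    finally show ?thesis using Aiff by auto
  qed
  have "g * 1 < g * s" using g_pos s by (intro mult_strict_left_mono) auto
  hence g_lt: "g < n" using s(1)[symmetric] by simp
  have hD: "h \<in> D" using hpos h g_le unfolding D_def by simp
  obtain x where xD: "x \<in> D" and xC: "x \<in> C"
  proof (cases "h \<in> C")
    case True then show ?thesis using hD that by blast
  next
    case False
    then obtain c where c: "c \<in> C" "A h c" using dom[of h] hD unfolding D_def by auto
    moreover have "c \<in> D" using toD[OF hD] c CV by auto
    ultimately show ?thesis using that by blast
  qed
  define x' where "x' = n - x"
  have xpos: "x > 0" using xD hpos unfolding D_def by (cases "x = 0") auto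
  have xn: "x < n" using xD unfolding D_def by auto
  have nmod: "n mod g = 0" using g_dvd_n by simp
  have x'D: "x' \<in> D" using negh[OF nmod] xD xpos unfolding D_def x'_def by auto
  have xx': "x \<noteq> x'"
  proof
    assume "x = x'"
    hence "n = 2 * x" unfolding x'_def by simp
    also have "x = g * (x div g) + x mod g" by simp
    also have "x mod g = h" using xD unfolding D_def by simp
    finally have "n = 2 * (g * (x div g) + h)" .
    moreover have "2 * (g * (x div g) + h) = g * (2 * (x div g) + 1)"
      using h by (simp add: algebra_simps)
    ultimately have "n = g * (2 * (x div g) + 1)" by (rule trans)
    hence "g * s = g * (2 * (x div g) + 1)" by (rule trans[OF s(1)[symmetric]])
    hence "s = 2 * (x div g) + 1" using g_pos by simp
    thus False using s(2) by simp
  qed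
  have x'C: "x' \<in> C"
  proof (rule ccontr)
    assume "x' \<notin> C"
    then obtain c where cC: "c \<in> C" "A x' c" using dom[of x'] x'D unfolding D_def by auto
    have cD: "c \<in> D" using toD[OF x'D] cC CV by auto
    have "c \<noteq> x" using cC xn unfolding A_def x'_def by auto
    have "c \<noteq> x'" using cC unfolding A_def by auto
    have "(x + c) mod n \<noteq> 0"
      using mod_ne0[of "x+c"] xpos xn cD \<open>c \<noteq> x'\<close> unfolding D_def x'_def by auto
    hence "A x c" using inD xD cD \<open>c \<noteq> x\<close> by auto
    thus False using ind xC cC by blast
  qed
  define v1 where "v1 = (x + g) mod n"
  define v2 where "v2 = (x + 2*g) mod n"
  have v1D: "v1 \<in> D"
  proof -
    have "v1 mod g = (x + g) mod g" unfolding v1_def using g_dvd_n by (simp add: mod_mod_cancel)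
    thus ?thesis using xD n1 unfolding D_def v1_def by simp
  qed
  have v2D: "v2 \<in> D"
  proof -
    have "v2 mod g = (x + 2*g) mod g" unfolding v2_def using g_dvd_n by (simp add: mod_mod_cancel)
    thus ?thesis using xD n1 unfolding D_def v2_def by simp
  qed
  have ndg: "\<not> n dvd g" using g_pos g_lt zdvd_imp_le by fastforce
  have "g * 2 < g * s" using g_pos s4 by (intro mult_strict_left_mono) auto
  hence g2lt: "2 * g < n" using s(1)[symmetric] by simp
  have ndg2: "\<not> n dvd (2*g)" using g_pos g2lt zdvd_imp_le by fastforce
  have "v1 \<noteq> x"
  proof
    assume "v1 = x"
    hence "(x + g) mod n = x mod n" using xD unfolding v1_def D_def by simp
    hence "n dvd (x + g - x)" by (simp add: mod_eq_dvd_iff)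
    thus False using ndg by simp
  qed
  have "v2 \<noteq> x"
  proof
    assume "v2 = x"
    hence "(x + 2*g) mod n = x mod n" using xD unfolding v2_def D_def by simp
    hence "n dvd (x + 2*g - x)" by (simp add: mod_eq_dvd_iff)
    thus False using ndg2 by simp
  qed
  have "v1 \<noteq> v2"
  proof
    assume "v1 = v2"
    hence "(x + 2*g) mod n = (x + g) mod n" unfolding v1_def v2_def by simp
    hence "n dvd (x + 2*g - (x + g))" by (simp add: mod_eq_dvd_iff)
    thus False using ndg by simp
  qed
  obtain v where vD: "v \<in> D" and vx: "v \<noteq> x" and vx': "v \<noteq> x'"
    using v1D v2D \<open>v1 \<noteq> x\<close> \<open>v2 \<noteq> x\<close> \<open>v1 \<noteq> v2\<close> by blast
  have Axv: "A x v"
    using inD[OF xD vD] mod_ne0[of "x+v"] xpos xn vD vx vx' unfolding D_def x'_def by auto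
  have Ax'v: "A x' v"
    using inD[OF x'D vD] mod_ne0[of "x'+v"] xpos xn vD vx vx' unfolding D_def x'_def by auto
  have "v \<notin> C" using ind xC Axv by blast
  hence "\<exists>!c. c \<in> C \<and> A v c" using dom vD unfolding D_def by auto
  moreover have "A v x" "A v x'" using Axv Ax'v Asym by auto
  ultimately show False using xC x'C xx' by blast
qed

end

lemma ev2:
  fixes a :: int assumes "a dvd 2^k" "a > 1" shows "even a"
proof (rule ccontr)
  assume "odd a"
  hence "coprime a (2^k)" by simp
  hence "is_unit a" using coprime_absorb_left[OF assms(1)] by simp
  thus False using assms(2) by simp
qed

theorem corollary3p10:
  fixes k :: nat and K :: "int set"
  assumes "k \<ge> 1"
    and "subgroup K (add_monoid (residue_ring (2 ^ k)))"
  shows "(\<exists>C. perfect_code (carrier (residue_ring (2 ^ k)))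
                (sum_graph_adj (add_monoid (residue_ring (2 ^ k))) K) C)
         \<longleftrightarrow> card K \<in> {1, 2, 2 ^ k}"
proof -
  define n :: int where "n = 2^k"
  have n1: "n > 1" using assms(1) unfolding n_def by (simp add: one_less_power)
  have sg: "subgroup K (add_monoid (residue_ring n))" using assms(2) n_def by simp
  have carr: "carrier (residue_ring n) = {0..n-1}" by (simp add: residue_ring_def)
  define A where "A = (\<lambda>x y. x \<noteq> y \<and> (x+y) mod n \<in> K - {0})"
  have adj: "sum_graph_adj (add_monoid (residue_ring n)) K = A"
    by (simp add: fun_eq_iff sum_graph_adj_def residue_ring_def A_def)
  have Ksub: "K \<subseteq> {0..<n}" using subgroup.subset[OF sg] by (auto simp: residue_ring_def)
  have K0: "0 \<in> K" using subgroup.one_closed[OF sg] by (simp add: residue_ring_def)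
  have Kadd: "\<And>x y. x \<in> K \<Longrightarrow> y \<in> K \<Longrightarrow> (x + y) mod n \<in> K"
    using subgroup.m_closed[OF sg] by (simp add: residue_ring_def)
  interpret sgK n K using n1 Ksub K0 Kadd by unfold_locales auto
  have nk: "nat n = 2^k" unfolding n_def by (simp add: nat_power_eq)
  obtain s where ns: "n = g * s" using g_dvd_n by (rule dvdE)
  note sn = ns[symmetric]
  have "g * s div g = s" using g_pos by simp
  hence sdiv: "n div g = s" using sn by simp
  have cardK: "card K = nat s" using card_K sdiv by simp
  have "0 < g * s" using sn n1 by simp
  hence spos: "s > 0" using g_pos by (simp add: zero_less_mult_iff)
  have finK: "finite K" using Ksub finite_subset by blast
  have "(\<exists>C. perfect_code {0..n-1} A C) \<longleftrightarrow> card K \<in> {1, 2, nat n}"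
  proof
    assume "\<exists>C. perfect_code {0..n-1} A C"
    then obtain C where pc: "perfect_code {0..n-1} A C" by blast
    show "card K \<in> {1, 2, nat n}"
    proof (rule ccontr)
      assume nc: "card K \<notin> {1, 2, nat n}"
      hence s3: "s \<ge> 3" "s \<noteq> n" using cardK spos by auto
      have "g \<noteq> 1"
      proof
        assume "g = 1"
        hence "s = n" using sn by simp
        thus False using s3 by simp
      qed
      hence "even g" using ev2[of g k] g_dvd_n g_pos unfolding n_def by auto
      then obtain h where h: "g = 2 * h" by (rule evenE)
      have "s dvd g * s" by simp
      hence "s dvd n" using sn by simp
      hence "s dvd 2^k" using n_def by simp
      hence "even s" using ev2[of s k] s3 by auto
      thus False using no_code[OF h ns _ s3(1)] pc unfolding A_def by blast
    qed
  next
    assume "card K \<in> {1, 2, nat n}"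
    then consider "card K = 1" | "card K = 2" | "card K = nat n" by auto
    thus "\<exists>C. perfect_code {0..n-1} A C"
    proof cases
      case 1
      hence "K = {0}" using K0 by (auto simp: card_1_singleton_iff)
      hence "perfect_code {0..n-1} A {0..n-1}" unfolding perfect_code_def A_def by auto
      thus ?thesis by blast
    next
      case 3
      have "card K = card {0..<n}" using 3 by simp
      hence KV: "K = {0..<n}" using card_subset_eq[OF _ Ksub] by simp
      have "perfect_code {0..n-1} A {0}" using n1 unfolding perfect_code_def A_def KV by auto
      thus ?thesis by blast
    next
      case 2
      then obtain a b where ab: "K = {a, b}" "a \<noteq> b" by (auto simp: card_2_iff)
      obtain m where Km: "K - {0} = {m}" and m: "0 < m" "m < n"
      proof -
        have "a = 0 \<or> b = 0" using K0 ab by auto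
        thus ?thesis
        proof
          assume "a = 0" thus ?thesis using that[of b] ab Ksub by force
        next
          assume "b = 0" thus ?thesis using that[of a] ab Ksub by force
        qed
      qed
      define f where "f x = (m - x) mod n" for x
      have fV: "0 \<le> f x \<and> f x < n" for x unfolding f_def using n1 by simp
      have Af: "A x y \<longleftrightarrow> x \<noteq> y \<and> y = f x" if "0 \<le> y" "y < n" for x y
      proof -
        have "(x + y) mod n = m \<longleftrightarrow> y = f x"
        proof
          assume e: "(x + y) mod n = m"
          have "f x = ((x + y) mod n - x) mod n" unfolding f_def e ..
          also have "\<dots> = y mod n" by (simp add: mod_diff_left_eq)
          finally show "y = f x" using that by simp
        next
          assume "y = f x"
          hence "(x + y) mod n = (x + (m - x)) mod n" unfolding f_def by (simp add: mod_add_right_eq)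
          thus "(x + y) mod n = m" using m by simp
        qed
        thus ?thesis unfolding A_def using Km by auto
      qed
      have ff: "f (f x) = x" if "0 \<le> x" "x < n" for x
      proof -
        have "f (f x) = (m - (m - x)) mod n" unfolding f_def by (simp add: mod_diff_right_eq)
        thus ?thesis using that by simp
      qed
      define C where "C = {x. 0 \<le> x \<and> x < n \<and> x \<le> f x}"
      have "perfect_code {0..n-1} A C"
        unfolding perfect_code_def
      proof (intro conjI ballI)
        show "C \<subseteq> {0..n-1}" unfolding C_def by auto
      next
        fix x y assume xy: "x \<in> C" "y \<in> C"
        show "\<not> A x y"
        proof
          assume a: "A x y"
          have Asym: "A y x" using a unfolding A_def by (simp add: add.commute)
          have y: "y = f x" "x \<noteq> y" using Af[of y x] a xy unfolding C_def by auto
          have x: "x = f y" using Af[of x y] Asym xy unfolding C_def by auto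
          have le: "x \<le> f x" "y \<le> f y" using xy unfolding C_def by auto
          have "x \<le> y" using le(1) y(1) by simp
          moreover have "y \<le> x" using le(2) x by simp
          ultimately show False using y(2) by simp
        qed
      next
        fix v assume v: "v \<in> {0..n-1} - C"
        hence v0: "0 \<le> v" "v < n" "f v < v" unfolding C_def by auto
        show "\<exists>!c. c \<in> C \<and> A v c"
        proof
          have "f (f v) = v" using ff v0 by simp
          hence "f v \<in> C" using fV[of v] v0 unfolding C_def by simp
          moreover have "A v (f v)" using Af[of "f v" v] fV[of v] v0 by simp
          ultimately show "f v \<in> C \<and> A v (f v)" ..
        next
          fix c assume c: "c \<in> C \<and> A v c"
          hence "0 \<le> c" "c < n" unfolding C_def by auto
          thus "c = f v" using Af[of c v] c by simp
        qed
      qed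
      thus ?thesis by blast
    qed
  qed
  note main = this
  have e: "(2::int)^k = n" by (simp add: n_def)
  show ?thesis unfolding e adj
    apply (unfold carr)
    apply (unfold nk[symmetric])
    by (rule main)
qed

end
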